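(* Let $p$ be an odd prime and let $O_n(\mathbb Z_{(p)})$ act on $\mathbb Z_{(p)}^n$ in the canonical way. Then $H_i(O_n(\mathbb Z_{(p)});\mathbb Z_{(p)}^n)=0$ for $i\leq\frac{n-8}{2}$.
   Context: $\mathbb Z_{(p)}$ is the localization of $\mathbb Z$ at the prime ideal $(p)$. $O_n(\mathbb Z_{(p)})$ is the group of $\mathbb Z_{(p)}$-linear automorphisms of $\mathbb Z_{(p)}^n$ preserving the form $x_1^2+\dots+x_n^2$. *)

theory Defs
  imports Complex_Main "HOL-Computational_Algebra.Primes" "HOL-Library.Function_Algebras"
begin

definition zloc :: "nat \<Rightarrow> rat set" where
  "zloc p = {q. \<not> (int p dvd snd (quotient_of q))}"

definition zvecs :: "nat \<Rightarrow> nat \<Rightarrow> (nat \<Rightarrow> rat) set" where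
  "zvecs n p = {v. (\<forall>k. v k \<in> zloc p) \<and> (\<forall>k. n \<le> k \<longrightarrow> v k = 0)}"

definition zmats :: "nat \<Rightarrow> nat \<Rightarrow> (nat \<Rightarrow> nat \<Rightarrow> rat) set" where
  "zmats n p = {A. (\<forall>i j. A i j \<in> zloc p) \<and> (\<forall>i j. n \<le> i \<or> n \<le> j \<longrightarrow> A i j = 0)}"

definition mat_mult :: "nat \<Rightarrow> (nat \<Rightarrow> nat \<Rightarrow> rat) \<Rightarrow> (nat \<Rightarrow> nat \<Rightarrow> rat) \<Rightarrow> (nat \<Rightarrow> nat \<Rightarrow> rat)" where
  "mat_mult n A B = (\<lambda>i j. \<Sum>k<n. A i k * B k j)"

definition mat_one :: "nat \<Rightarrow> nat \<Rightarrow> nat \<Rightarrow> rat" where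
  "mat_one n = (\<lambda>i j. if i = j \<and> i < n then 1 else 0)"

definition mat_vec :: "nat \<Rightarrow> (nat \<Rightarrow> nat \<Rightarrow> rat) \<Rightarrow> (nat \<Rightarrow> rat) \<Rightarrow> (nat \<Rightarrow> rat)" where
  "mat_vec n A v = (\<lambda>i. \<Sum>k<n. A i k * v k)"

definition qform :: "nat \<Rightarrow> (nat \<Rightarrow> rat) \<Rightarrow> rat" where
  "qform n v = (\<Sum>k<n. (v k)^2)"

definition orth_group :: "nat \<Rightarrow> nat \<Rightarrow> (nat \<Rightarrow> nat \<Rightarrow> rat) set" where
  "orth_group n p = {A \<in> zmats n p.
      (\<exists>B \<in> zmats n p. mat_mult n A B = mat_one n \<and> mat_mult n B A = mat_one n) \<and>
      (\<forall>v \<in> zvecs n p. qform n (mat_vec n A v) = qform n v)}"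

text \<open>C_i(G;M) = Z[G^i] (x) M, represented as finitely supported functions from
  i-tuples (lists of length i) of group elements to M.\<close>
definition bar_chains :: "'g set \<Rightarrow> 'm::ab_group_add set \<Rightarrow> nat \<Rightarrow> ('g list \<Rightarrow> 'm) set" where
  "bar_chains G M i = {c. finite {\<sigma>. c \<sigma> \<noteq> 0} \<and>
      (\<forall>\<sigma>. c \<sigma> \<noteq> 0 \<longrightarrow> length \<sigma> = i \<and> set \<sigma> \<subseteq> G) \<and> (\<forall>\<sigma>. c \<sigma> \<in> M)}"

definition bar_face :: "('g \<Rightarrow> 'g \<Rightarrow> 'g) \<Rightarrow> ('g \<Rightarrow> 'm \<Rightarrow> 'm) \<Rightarrow> nat \<Rightarrow> 'g list \<Rightarrow> 'm \<Rightarrow> 'g list \<times> 'm" where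
  "bar_face gmul act j \<sigma> m =
     (if j = 0 then (tl \<sigma>, m)
      else if j = length \<sigma> then (butlast \<sigma>, act (last \<sigma>) m)
      else (take (j - 1) \<sigma> @ [gmul (\<sigma> ! (j - 1)) (\<sigma> ! j)] @ drop (j + 1) \<sigma>, m))"

text \<open>Boundary d = sum_j (-1)^j d_j (used only on chains of positive degree).\<close>
definition bar_bd :: "('g \<Rightarrow> 'g \<Rightarrow> 'g) \<Rightarrow> ('g \<Rightarrow> 'm \<Rightarrow> 'm) \<Rightarrow> ('g list \<Rightarrow> 'm::ab_group_add) \<Rightarrow> ('g list \<Rightarrow> 'm)" where
  "bar_bd gmul act c = (\<lambda>\<tau>. \<Sum>\<sigma> \<in> {\<sigma>. c \<sigma> \<noteq> 0}. \<Sum>j \<in> {0..length \<sigma>}.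
      (let (\<rho>, m) = bar_face gmul act j \<sigma> (c \<sigma>) in
        if \<rho> = \<tau> then (if even j then m else - m) else 0))"

definition group_homology_vanishes ::
  "'g set \<Rightarrow> ('g \<Rightarrow> 'g \<Rightarrow> 'g) \<Rightarrow> ('g \<Rightarrow> 'm \<Rightarrow> 'm) \<Rightarrow> 'm::ab_group_add set \<Rightarrow> nat \<Rightarrow> bool" where
  "group_homology_vanishes G gmul act M i \<longleftrightarrow>
     (\<forall>c \<in> bar_chains G M i. (i = 0 \<or> bar_bd gmul act c = (\<lambda>_. 0)) \<longrightarrow>
        (\<exists>b \<in> bar_chains G M (Suc i). bar_bd gmul act b = c))"

end

theory Submission
  imports Defs
begin


lemma zloc_iff:
  assumes "prime p"
  shows "q \<in> zloc p \<longleftrightarrow> (\<exists>a b. b \<noteq> 0 \<and> \<not> int p dvd b \<and> q = of_int a / of_int b)"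
proof
  assume q: "q \<in> zloc p"
  obtain n d where nd: "quotient_of q = (n, d)" by (cases "quotient_of q") auto
  have d0: "d > 0" using nd quotient_of_denom_pos by blast
  have qq: "q = of_int n / of_int d" using nd quotient_of_div by blast
  have pd: "\<not> int p dvd d" using q nd unfolding zloc_def by simp
  show "\<exists>a b. b \<noteq> 0 \<and> \<not> int p dvd b \<and> q = of_int a / of_int b"
    using d0 qq pd by (intro exI[of _ n] exI[of _ d]) simp
next
  assume "\<exists>a b. b \<noteq> 0 \<and> \<not> int p dvd b \<and> q = of_int a / of_int b"
  then obtain a b where b: "b \<noteq> 0" "\<not> int p dvd b" "q = of_int a / of_int b" by blast
  obtain n d where nd: "quotient_of q = (n, d)" by (cases "quotient_of q") auto
  have d0: "d > 0" using nd quotient_of_denom_pos by blast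
  have cop: "coprime d n" using nd quotient_of_coprime coprime_commute by blast
  have "q = of_int n / of_int d" using nd quotient_of_div by blast
  with b have "(of_int a :: rat) / of_int b = of_int n / of_int d" by simp
  hence "(of_int (a * d) :: rat) = of_int (n * b)" using b(1) d0
    by (simp add: field_simps)
  hence e: "a * d = n * b" by (simp only: of_int_eq_iff)
  have "d dvd n * b" unfolding e[symmetric] by (rule dvd_triv_right)
  hence "d dvd b" using coprime_dvd_mult_right_iff[OF cop] by blast
  hence "\<not> int p dvd d" using b(2) dvd_trans by blast
  thus "q \<in> zloc p" unfolding zloc_def using nd by simp
qed

lemma zloc_add: "prime p \<Longrightarrow> x \<in> zloc p \<Longrightarrow> y \<in> zloc p \<Longrightarrow> x + y \<in> zloc p"
proof -
  assume p: "prime p" and x: "x \<in> zloc p" and y: "y \<in> zloc p"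
  obtain a b where ab: "b \<noteq> 0" "\<not> int p dvd b" "x = of_int a / of_int b" using x zloc_iff[OF p] by blast
  obtain c d where cd: "d \<noteq> 0" "\<not> int p dvd d" "y = of_int c / of_int d" using y zloc_iff[OF p] by blast
  have pp: "prime (int p)" using p by simp
  have 1: "\<not> int p dvd b * d" using ab cd pp by (simp add: prime_dvd_mult_iff)
  have 2: "x + y = of_int (a * d + c * b) / of_int (b * d)" using ab cd by (simp add: field_simps)
  have 3: "b * d \<noteq> 0" using ab cd by simp
  show ?thesis unfolding zloc_iff[OF p] using 1 2 3 by blast
qed

lemma zloc_neg: "prime p \<Longrightarrow> x \<in> zloc p \<Longrightarrow> - x \<in> zloc p"
proof -
  assume p: "prime p" and x: "x \<in> zloc p"
  obtain a b where ab: "b \<noteq> 0" "\<not> int p dvd b" "x = of_int a / of_int b" using x zloc_iff[OF p] by blast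
  have "- x = of_int (- a) / of_int b" using ab by simp
  thus ?thesis using zloc_iff[OF p] ab by blast
qed

lemma zloc_int: "prime p \<Longrightarrow> of_int k \<in> zloc p"
proof -
  assume p: "prime p"
  have 1: "\<not> int p dvd 1" using prime_gt_1_nat[OF p] by simp
  have 2: "(of_int k :: rat) = of_int k / of_int 1" by simp
  show ?thesis unfolding zloc_iff[OF p] using 1 2 by (intro exI[of _ k] exI[of _ 1]) simp
qed

lemma zloc_half: "prime p \<Longrightarrow> odd p \<Longrightarrow> x \<in> zloc p \<Longrightarrow> x / 2 \<in> zloc p"
proof -
  assume p: "prime p" and o: "odd p" and x: "x \<in> zloc p"
  obtain a b where ab: "b \<noteq> 0" "\<not> int p dvd b" "x = of_int a / of_int b" using x zloc_iff[OF p] by blast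
  have pp: "prime (int p)" using p by simp
  have "\<not> int p dvd 2"
  proof
    assume "int p dvd 2"
    hence "p dvd 2" by presburger
    hence "p \<le> 2" by (simp add: dvd_imp_le)
    moreover have "p \<noteq> 2" using o by auto
    moreover have "p \<ge> 2" using prime_ge_2_nat[OF p] .
    ultimately show False by simp
  qed
  hence 1: "\<not> int p dvd 2 * b" using ab pp by (simp add: prime_dvd_mult_iff)
  have 2: "x / 2 = of_int a / of_int (2 * b)" using ab by simp
  have 3: "2 * b \<noteq> 0" using ab by simp
  show ?thesis unfolding zloc_iff[OF p] using 1 2 3 by blast
qed


lemma comb:
  fixes e t :: "nat \<Rightarrow> nat \<Rightarrow> 'a::ab_group_add"
  assumes n: "1 \<le> n"
    and e00: "e 0 0 = A" and enn: "e n (Suc n) = B"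
    and ediag: "\<And>j. 1 \<le> j \<Longrightarrow> j \<le> n \<Longrightarrow> e j j = - e (j - 1) j"
    and elo: "\<And>j k. k < j \<Longrightarrow> j \<le> n \<Longrightarrow> e j k = - t k (j - 1)"
    and ehi: "\<And>j k. j + 2 \<le> k \<Longrightarrow> k \<le> Suc n \<Longrightarrow> e j k = - t (k - 1) j"
  shows "(\<Sum>j\<in>{0..n}. \<Sum>k\<in>{0..Suc n}. e j k) = A + B - (\<Sum>k\<in>{0..n}. \<Sum>j\<in>{0..<n}. t k j)"
proof -
  define D where "D = (\<lambda>j. (j, j)) ` {1..n}"
  define S where "S = (\<lambda>j. (j, Suc j)) ` {0..<n}"
  define L where "L = {(j, k). k < j \<and> j \<le> n}"
  define Hi where "Hi = {(j, k). j + 2 \<le> k \<and> k \<le> Suc n}"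
  define Q1 where "Q1 = {(k, j). k \<le> j \<and> j < n}"
  define Q2 where "Q2 = {(k, j). j < k \<and> k \<le> n}"
  have fL: "finite L" unfolding L_def by (rule finite_subset[of _ "{0..n} \<times> {0..n}"]) auto
  have fH: "finite Hi" unfolding Hi_def by (rule finite_subset[of _ "{0..Suc n} \<times> {0..Suc n}"]) auto
  have fQ1: "finite Q1" unfolding Q1_def by (rule finite_subset[of _ "{0..n} \<times> {0..n}"]) auto
  have fQ2: "finite Q2" unfolding Q2_def by (rule finite_subset[of _ "{0..n} \<times> {0..n}"]) auto
  have P: "{0..n} \<times> {0..Suc n} = insert (0,0) (insert (n, Suc n) (D \<union> (S \<union> (L \<union> Hi))))"
    unfolding D_def S_def L_def Hi_def
  proof (intro equalityI subsetI)
    fix x assume "x \<in> {0..n} \<times> {0..Suc n}"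
    then obtain j k where x: "x = (j, k)" "j \<le> n" "k \<le> Suc n" by auto
    show "x \<in> insert (0,0) (insert (n, Suc n) ((\<lambda>j. (j, j)) ` {1..n} \<union> ((\<lambda>j. (j, Suc j)) ` {0..<n} \<union> ({(j, k). k < j \<and> j \<le> n} \<union> {(j, k). j + 2 \<le> k \<and> k \<le> Suc n}))))"
    proof (cases "k < j")
      case True thus ?thesis using x by auto
    next
      case False
      then consider "k = j" | "k = Suc j" | "j + 2 \<le> k" by linarith
      thus ?thesis
      proof cases
        case 1 thus ?thesis using x by (cases "j = 0") auto
      next
        case 2 thus ?thesis using x by (cases "j = n") auto
      next
        case 3 thus ?thesis using x by auto
      qed
    qed
  qed auto
  have sumP: "(\<Sum>j\<in>{0..n}. \<Sum>k\<in>{0..Suc n}. e j k) = (\<Sum>(j,k)\<in>{0..n} \<times> {0..Suc n}. e j k)"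
    by (rule sum.cartesian_product)
  also have "\<dots> = e 0 0 + (e n (Suc n) + (sum (case_prod e) D + (sum (case_prod e) S + (sum (case_prod e) L + sum (case_prod e) Hi))))"
    unfolding P
    apply (subst sum.insert)
      apply (simp add: D_def S_def fL fH)
     using n apply (auto simp: D_def S_def L_def Hi_def)[1]
    apply (subst sum.insert)
      apply (simp add: D_def S_def fL fH)
     apply (auto simp: D_def S_def L_def Hi_def)[1]
    apply (subst sum.union_disjoint)
       apply (simp add: D_def S_def fL fH)
      apply (simp add: D_def S_def fL fH)
     apply (auto simp: D_def S_def L_def Hi_def)[1]
    apply (subst sum.union_disjoint)
       apply (simp add: D_def S_def fL fH)
      apply (simp add: D_def S_def fL fH)
     apply (auto simp: D_def S_def L_def Hi_def)[1]
    apply (subst sum.union_disjoint)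
       apply (simp add: D_def S_def fL fH)
      apply (simp add: D_def S_def fL fH)
     apply (auto simp: D_def S_def L_def Hi_def)[1]
    apply simp
    done
  also have "sum (case_prod e) D = - sum (case_prod e) S"
  proof -
    have "sum (case_prod e) D = (\<Sum>j\<in>{1..n}. e j j)"
      unfolding D_def by (subst sum.reindex) (auto simp: inj_on_def)
    also have "\<dots> = (\<Sum>j\<in>{1..n}. - e (j - 1) j)" using ediag by (intro sum.cong) auto
    also have "\<dots> = (\<Sum>j\<in>{0..<n}. - e j (Suc j))"
      by (rule sum.reindex_bij_witness[of _ Suc "\<lambda>j. j - 1"]) auto
    also have "\<dots> = - sum (case_prod e) S"
      unfolding S_def by (subst sum.reindex) (auto simp: inj_on_def sum_negf)
    finally show ?thesis .
  qed
  also have "sum (case_prod e) L = - sum (case_prod t) Q1"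
  proof -
    have "sum (case_prod e) L = sum (\<lambda>(k, j). - t k j) Q1"
      by (rule sum.reindex_bij_witness[of _ "\<lambda>(k, j). (Suc j, k)" "\<lambda>(j, k). (k, j - 1)"])
         (auto simp: L_def Q1_def elo)
    thus ?thesis by (simp add: sum_negf case_prod_beta')
  qed
  also have "sum (case_prod e) Hi = - sum (case_prod t) Q2"
  proof -
    have "sum (case_prod e) Hi = sum (\<lambda>(k, j). - t k j) Q2"
      by (rule sum.reindex_bij_witness[of _ "\<lambda>(k, j). (j, Suc k)" "\<lambda>(j, k). (k - 1, j)"])
         (auto simp: Hi_def Q2_def ehi)
    thus ?thesis by (simp add: sum_negf case_prod_beta')
  qed
  also have "(\<Sum>k\<in>{0..n}. \<Sum>j\<in>{0..<n}. t k j) = sum (case_prod t) Q1 + sum (case_prod t) Q2"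
  proof -
    have "(\<Sum>k\<in>{0..n}. \<Sum>j\<in>{0..<n}. t k j) = sum (case_prod t) ({0..n} \<times> {0..<n})"
      by (rule sum.cartesian_product)
    also have "{0..n} \<times> {0..<n} = Q1 \<union> Q2" unfolding Q1_def Q2_def by auto
    also have "sum (case_prod t) (Q1 \<union> Q2) = sum (case_prod t) Q1 + sum (case_prod t) Q2"
      by (rule sum.union_disjoint[OF fQ1 fQ2]) (auto simp: Q1_def Q2_def)
    finally show ?thesis .
  qed
  ultimately show ?thesis using e00 enn by (simp add: algebra_simps)
qed


definition supp :: "('a \<Rightarrow> 'b::zero) \<Rightarrow> 'a set" where "supp c = {x. c x \<noteq> 0}"
definition delta :: "'a \<Rightarrow> 'b::zero \<Rightarrow> 'a \<Rightarrow> 'b" where "delta r m = (\<lambda>t. if r = t then m else 0)"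
definition sgnm :: "nat \<Rightarrow> 'b::ab_group_add \<Rightarrow> 'b" where "sgnm j x = (if even j then x else - x)"
definition extl :: "('a \<Rightarrow> 'b::zero \<Rightarrow> 'c::comm_monoid_add) \<Rightarrow> ('a \<Rightarrow> 'b) \<Rightarrow> 'c" where
  "extl P c = (\<Sum>s\<in>supp c. P s (c s))"
definition addv :: "('a \<Rightarrow> 'b::ab_group_add \<Rightarrow> 'c::ab_group_add) \<Rightarrow> bool" where
  "addv P \<longleftrightarrow> (\<forall>s a b. P s (a + b) = P s a + P s b)"

lemma sum_fun_apply: "(\<Sum>x\<in>A. f x) y = (\<Sum>x\<in>A. f x y)"
  by (induction A rule: infinite_finite_induct) auto

lemma sgnm_apply: "sgnm j f y = sgnm j (f y)" by (simp add: sgnm_def)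
lemma sgnm_add: "sgnm j (a + b) = sgnm j a + sgnm j b" by (simp add: sgnm_def)
lemma sgnm_neg: "sgnm j (- a) = - sgnm j a" by (simp add: sgnm_def)
lemma sgnm_sum: "sgnm j (\<Sum>x\<in>A. f x) = (\<Sum>x\<in>A. sgnm j (f x))"
  by (simp add: sgnm_def sum_negf)
lemma sgnm_sgnm: "sgnm j (sgnm k x) = sgnm (j + k) x" by (simp add: sgnm_def)
lemma sgnm_zero[simp]: "sgnm j 0 = 0" by (simp add: sgnm_def)
lemma delta_add: "delta r ((a::'b::ab_group_add) + b) = delta r a + delta r b" by (auto simp: delta_def fun_eq_iff)
lemma delta_zero[simp]: "delta r 0 = 0" by (auto simp: delta_def)

lemma addv_zero: "addv P \<Longrightarrow> P s 0 = 0"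
  unfolding addv_def by (metis add_0 add_cancel_right_right)
lemma addv_neg: "addv P \<Longrightarrow> P s (- a) = - P s a"
  unfolding addv_def by (metis add.right_inverse add_0 addv_def addv_zero eq_neg_iff_add_eq_0)

lemma supp_add: "supp ((c::'a \<Rightarrow> 'b::ab_group_add) + d) \<subseteq> supp c \<union> supp d" by (auto simp: supp_def)
lemma supp_neg[simp]: "supp (- (c::'a \<Rightarrow> 'b::ab_group_add)) = supp c" by (auto simp: supp_def)
lemma supp_sgnm[simp]: "supp (sgnm j c) = supp c" by (auto simp: supp_def sgnm_def)
lemma supp_delta: "supp (delta r m) \<subseteq> {r}" by (auto simp: supp_def delta_def)
lemma finite_supp_delta[simp]: "finite (supp (delta r m))" using supp_delta finite_subset by fastforce
lemma finite_supp_sum: "finite A \<Longrightarrow> (\<And>x. x \<in> A \<Longrightarrow> finite (supp ((f x)::'a \<Rightarrow> 'b::ab_group_add))) \<Longrightarrow> finite (supp (\<Sum>x\<in>A. f x))"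
proof (induction A rule: finite_induct)
  case empty thus ?case by (simp add: supp_def)
next
  case (insert x F)
  have "finite (supp (f x) \<union> supp (sum f F))" using insert by simp
  thus ?case unfolding sum.insert[OF insert(1,2)] by (rule finite_subset[OF supp_add])
qed

lemma extl_superset:
  assumes "finite S" "supp c \<subseteq> S" "addv P"
  shows "extl P c = (\<Sum>s\<in>S. P s (c s))"
  unfolding extl_def
  by (rule sum.mono_neutral_left) (use assms in \<open>auto simp: supp_def addv_zero\<close>)

lemma extl_add:
  assumes "finite (supp c)" "finite (supp d)" "addv P"
  shows "extl P (c + d) = extl P c + extl P d"
proof -
  let ?S = "supp c \<union> supp d"
  have "extl P (c + d) = (\<Sum>s\<in>?S. P s ((c + d) s))"
    using assms supp_add[of c d] by (intro extl_superset) auto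
  also have "\<dots> = (\<Sum>s\<in>?S. P s (c s)) + (\<Sum>s\<in>?S. P s (d s))"
    using assms(3) by (simp add: addv_def sum.distrib)
  also have "\<dots> = extl P c + extl P d"
    using assms by (subst (1 2) extl_superset[where S = ?S]) auto
  finally show ?thesis .
qed

lemma extl_neg: "addv P \<Longrightarrow> extl P (- c) = - extl P c"
  by (simp add: extl_def addv_neg sum_negf)

lemma extl_sgnm: "addv P \<Longrightarrow> extl P (sgnm j c) = sgnm j (extl P c)"
  by (simp add: sgnm_def extl_neg)

lemma extl_zero[simp]: "extl P (0::'a \<Rightarrow> 'b::zero) = 0" by (simp add: extl_def supp_def)

lemma extl_sum:
  assumes "finite A" "\<And>x. x \<in> A \<Longrightarrow> finite (supp (f x))" "addv P"
  shows "extl P (\<Sum>x\<in>A. f x) = (\<Sum>x\<in>A. extl P (f x))"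
  using assms
proof (induction A rule: finite_induct)
  case empty thus ?case by (simp add: extl_def supp_def)
next
  case (insert x F)
  have A: "extl P (f x + sum f F) = extl P (f x) + extl P (sum f F)"
    using insert by (intro extl_add) (auto intro: finite_supp_sum)
  have B: "extl P (sum f F) = (\<Sum>x\<in>F. extl P (f x))" using insert by blast
  show ?case by (simp only: A B sum.insert[OF insert(1,2)])
qed

lemma extl_delta: "addv P \<Longrightarrow> extl P (delta r m) = P r m"
proof -
  assume a: "addv P"
  show ?thesis
  proof (cases "m = 0")
    case True thus ?thesis using a by (simp add: addv_zero)
  next
    case False
    hence "supp (delta r m) = {r}" by (auto simp: supp_def delta_def)
    thus ?thesis by (simp add: extl_def delta_def)
  qed
qed

lemma chain_as_sum: "finite (supp c) \<Longrightarrow> (\<Sum>s\<in>supp c. delta s (f (c s))) = (\<lambda>t. if c t = 0 then 0 else f (c t))"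
  by (rule ext) (auto simp: sum_fun_apply delta_def supp_def)

definition ins :: "'g \<Rightarrow> nat \<Rightarrow> 'g list \<Rightarrow> 'g list" where
  "ins z j s = take j s @ z # drop j s"

definition fc where
  "fc gmul act k s m = (case bar_face gmul act k s m of (r, m') \<Rightarrow> delta r m')"
definition hc where
  "hc gmul act z k j s m = (case bar_face gmul act k s m of (r, m') \<Rightarrow> delta (ins z j r) m')"
definition Fb where
  "Fb gmul act s m = (\<Sum>k\<in>{0..length s}. sgnm k (fc gmul act k s m))"
definition Hb where
  "Hb z s m = (\<Sum>j\<in>{0..length s}. sgnm j (delta (ins z j s) m))"

lemma bar_bd_extl: "bar_bd gmul act c = extl (Fb gmul act) c"
  unfolding bar_bd_def extl_def Fb_def supp_def
  by (rule ext) (auto simp: sum_fun_apply sgnm_apply fc_def delta_def sgnm_def Let_def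
        split: prod.split intro!: sum.cong)

lemma ins_0[simp]: "ins z 0 s = z # s" by (simp add: ins_def)
lemma ins_Cons: "ins z (Suc j) (x # s) = x # ins z j s" by (simp add: ins_def)
lemma ins_append_ge: "length A \<le> j \<Longrightarrow> ins z j (A @ B) = A @ ins z (j - length A) B"
  by (simp add: ins_def)
lemma ins_append_le: "j \<le> length A \<Longrightarrow> ins z j (A @ B) = ins z j A @ B"
  by (simp add: ins_def)
lemma length_ins: "j \<le> length s \<Longrightarrow> length (ins z j s) = Suc (length s)"
  by (simp add: ins_def)
lemma set_ins: "set (ins z j s) \<subseteq> insert z (set s)"
  unfolding ins_def using set_take_subset set_drop_subset by fastforce

lemma bf0: "bar_face gmul act 0 s m = (tl s, m)" by (simp add: bar_face_def)
lemma bflast: "bar_face gmul act (Suc (length s)) (s @ [x]) m = (s, act x m)"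
  by (simp add: bar_face_def)
lemma bfmid: "bar_face gmul act (Suc (length A)) (A @ a # b # B) m = (A @ gmul a b # B, m)"
  by (simp add: bar_face_def nth_append)

lemma decomp: "1 \<le> k \<Longrightarrow> k < length s \<Longrightarrow> s = take (k - 1) s @ s ! (k - 1) # s ! k # drop (Suc k) s"
  by (metis Cons_nth_drop_Suc One_nat_def Suc_pred append_take_drop_id less_imp_diff_less
      less_le_trans less_one not_le)



lemma sgnm_Suc: "sgnm (Suc i) x = - sgnm i x" by (simp add: sgnm_def)

lemma decomp2: "1 \<le> k \<Longrightarrow> k < length s \<Longrightarrow> \<exists>A a b B. s = A @ a # b # B \<and> length A = k - 1"
  using decomp by (metis length_take min_def not_le less_imp_diff_less less_imp_le)

lemma decomp1: "j < length s \<Longrightarrow> \<exists>A a B. s = A @ a # B \<and> length A = j"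
  by (metis id_take_nth_drop length_take min_def not_le less_imp_le)

lemma length_face: "1 \<le> length s \<Longrightarrow> k \<le> length s \<Longrightarrow> length (fst (bar_face gmul act k s m)) = length s - 1"
  by (auto simp: bar_face_def min_def)

locale barh =
  fixes G :: "'g set" and gmul :: "'g \<Rightarrow> 'g \<Rightarrow> 'g" and act :: "'g \<Rightarrow> 'm::ab_group_add \<Rightarrow> 'm" and z :: 'g
  assumes act_add: "act g (a + b) = act g a + act g b"
    and central: "g \<in> G \<Longrightarrow> gmul g z = gmul z g"
begin

lemma act_zero[simp]: "act g 0 = 0"
  using act_add[of g 0 0] by simp

lemma fc_add: "fc gmul act k s (a + b) = fc gmul act k s a + fc gmul act k s b"
  by (simp add: fc_def bar_face_def act_add delta_add)

lemma addv_F: "addv (Fb gmul act)"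
  unfolding addv_def Fb_def by (simp add: fc_add sgnm_add sum.distrib)

lemma addv_H: "addv (Hb z)"
  unfolding addv_def Hb_def by (simp add: delta_add sgnm_add sum.distrib)

lemma psig:
  assumes sG: "set s \<subseteq> G"
  shows "(\<Sum>j\<in>{0..length s}. sgnm j (Fb gmul act (ins z j s) m)) =
    delta s m - delta s (act z m) -
    (if s = [] then 0 else (\<Sum>k\<in>{0..length s}. sgnm k (case bar_face gmul act k s m of (r, m') \<Rightarrow> Hb z r m')))"
proof (cases "s = []")
  case True
  thus ?thesis by (simp add: Fb_def fc_def bar_face_def sgnm_def)
next
  case False
  define n where "n = length s"
  have n1: "1 \<le> n" using False n_def by (cases s) auto
  define e where "e j k = sgnm (j + k) (fc gmul act k (ins z j s) m)" for j k
  define t where "t k j = sgnm (k + j) (hc gmul act z k j s m)" for k j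
  have L: "(\<Sum>j\<in>{0..length s}. sgnm j (Fb gmul act (ins z j s) m)) = (\<Sum>j\<in>{0..n}. \<Sum>k\<in>{0..Suc n}. e j k)"
    unfolding n_def e_def Fb_def
  proof (intro sum.cong refl)
    fix j assume "j \<in> {0..length s}"
    hence "length (ins z j s) = Suc (length s)" by (simp add: length_ins)
    thus "sgnm j (\<Sum>k\<in>{0..length (ins z j s)}. sgnm k (fc gmul act k (ins z j s) m)) =
      (\<Sum>k\<in>{0..Suc (length s)}. sgnm (j + k) (fc gmul act k (ins z j s) m))"
      by (simp only: sgnm_sum sgnm_sgnm)
  qed
  have R: "(\<Sum>k\<in>{0..length s}. sgnm k (case bar_face gmul act k s m of (r, m') \<Rightarrow> Hb z r m')) =
     (\<Sum>k\<in>{0..n}. \<Sum>j\<in>{0..<n}. t k j)"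
    unfolding n_def
  proof (intro sum.cong refl)
    fix k assume k: "k \<in> {0..length s}"
    obtain r m' where bf: "bar_face gmul act k s m = (r, m')" by (cases "bar_face gmul act k s m") auto
    have lr: "length r = n - 1" using length_face[of s k gmul act m] k n1 bf n_def by auto
    have "{0..length r} = {0..<n}" using lr n1 by auto
    thus "sgnm k (case bar_face gmul act k s m of (r, m') \<Rightarrow> Hb z r m') = (\<Sum>j\<in>{0..<length s}. t k j)"
      unfolding t_def hc_def bf Hb_def n_def by (simp add: sgnm_sum sgnm_sgnm)
  qed
  have "(\<Sum>j\<in>{0..n}. \<Sum>k\<in>{0..Suc n}. e j k) = delta s m + - delta s (act z m) - (\<Sum>k\<in>{0..n}. \<Sum>j\<in>{0..<n}. t k j)"
  proof (rule comb[OF n1])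
    show "e 0 0 = delta s m" unfolding e_def by (simp add: fc_def bf0 sgnm_def)
    have "ins z n s = s @ [z]" unfolding ins_def n_def by simp
    hence "fc gmul act (Suc n) (ins z n s) m = delta s (act z m)"
      unfolding fc_def using bflast[of gmul act s z m] n_def by simp
    thus "e n (Suc n) = - delta s (act z m)" unfolding e_def by (simp add: sgnm_def)
  next
    fix j assume j: "1 \<le> j" "j \<le> n"
    obtain A a B where s: "s = A @ a # B" "length A = j - 1" using decomp1[of "j - 1" s] j n_def by (metis Suc_le_eq Suc_pred' less_le_trans not_less_eq_eq zero_less_one)
    have aG: "a \<in> G" using sG s by auto
    have i1: "ins z j s = A @ a # z # B"
      using s j ins_append_ge[of A j z "a # B"] by (simp add: ins_Cons numeral_eq_Suc)
    have i2: "ins z (j - 1) s = A @ z # a # B"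
      using s j ins_append_ge[of A "j - 1" z "a # B"] by simp
    have jj: "j = Suc (length A)" using s j by simp
    have "fc gmul act j (ins z j s) m = fc gmul act j (ins z (j - 1) s) m"
      unfolding i1 i2 fc_def using central[OF aG] by (simp add: jj bfmid)
    moreover have "even (j + j)" "odd (j - 1 + j)" using j by presburger+
    ultimately show "e j j = - e (j - 1) j" unfolding e_def sgnm_def by simp
  next
    fix j k assume jk: "k < j" "j \<le> n"
    have par: "j + k = Suc (k + (j - 1))" using jk by simp
    have "fc gmul act k (ins z j s) m = hc gmul act z k (j - 1) s m"
    proof (cases "k = 0")
      case True
      obtain x s' where s: "s = x # s'" using False by (cases s) auto
      have "ins z j s = x # ins z (j - 1) s'" using s jk ins_Cons[of z "j - 1" x s'] by simp
      thus ?thesis using True s unfolding fc_def hc_def by (simp add: bf0)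
    next
      case k0: False
      obtain A a b B where s: "s = A @ a # b # B" "length A = k - 1"
        using decomp2[of k s] k0 jk n_def by auto
      have kk: "k = Suc (length A)" using s k0 by simp
      have i1: "ins z j s = A @ a # b # ins z (j - k - 1) B"
        using s jk kk ins_append_ge[of "A @ [a, b]" j z B] by simp
      have i2: "ins z (j - 1) (A @ gmul a b # B) = A @ gmul a b # ins z (j - k - 1) B"
        using s jk kk ins_append_ge[of "A @ [gmul a b]" "j - 1" z B] by simp
      show ?thesis unfolding fc_def hc_def i1 using s(1) kk i2 by (simp add: bfmid)
    qed
    thus "e j k = - t k (j - 1)" unfolding e_def t_def par by (simp add: sgnm_Suc)
  next
    fix j k assume jk: "j + 2 \<le> k" "k \<le> Suc n"
    have par: "j + k = Suc (k - 1 + j)" using jk by simp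
    have "fc gmul act k (ins z j s) m = hc gmul act z (k - 1) j s m"
    proof (cases "k = Suc n")
      case True
      obtain s' x where s: "s = s' @ [x]" using False by (cases s rule: rev_cases) auto
      have ls: "length s' = n - 1" "n = Suc (length s')" using s n_def by auto
      have jl: "j \<le> length s'" using jk True ls(2) by linarith
      have i1: "ins z j s = ins z j s' @ [x]" unfolding s by (rule ins_append_le[OF jl])
      have ll: "k = Suc (length (ins z j s'))" using True ls(2) length_ins[OF jl] by simp
      have km: "k - 1 = Suc (length s')" using True ls(2) by simp
      have "hc gmul act z (k - 1) j s m = delta (ins z j s') (act x m)"
        unfolding hc_def km s bflast by simp
      thus ?thesis unfolding fc_def i1 ll bflast by simp
    next
      case False
      hence kn: "k - 1 < n" "1 \<le> k - 1" using jk by auto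
      obtain A a b B where s: "s = A @ a # b # B" "length A = k - 2"
        using decomp2[of "k - 1" s] kn n_def by auto
      have jA: "j \<le> length A" using s jk by simp
      have i1: "ins z j s = ins z j A @ a # b # B" unfolding s(1) by (rule ins_append_le[OF jA])
      have kk: "k = Suc (length (ins z j A))" using jA s jk by (simp add: length_ins)
      have kk2: "k - 1 = Suc (length A)" using s jk by simp
      have "hc gmul act z (k - 1) j s m = delta (ins z j A @ gmul a b # B) m"
        unfolding hc_def kk2 s(1) bfmid using jA ins_append_le[of j A z "gmul a b # B"] by simp
      thus ?thesis unfolding fc_def i1 kk bfmid by simp
    qed
    thus "e j k = - t (k - 1) j" unfolding e_def t_def par by (simp add: sgnm_Suc)
  qed
  thus ?thesis using L R False by simp
qed

end


lemma phi_sum: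
  fixes f :: "'a::ab_group_add \<Rightarrow> 'b::ab_group_add"
  shows "(\<And>a b. f (a + b) = f a + f b) \<Longrightarrow> f (sum g A) = (\<Sum>x\<in>A. f (g x))"
proof -
  assume add: "\<And>a b. f (a + b) = f a + f b"
  have "f 0 = f 0 + f 0" using add[of 0 0] by simp
  hence z: "f 0 = 0" by simp
  show ?thesis by (induction A rule: infinite_finite_induct) (auto simp: z add)
qed

lemma bar_bd_phi:
  fixes f :: "'m::ab_group_add \<Rightarrow> 'm"
  assumes add: "\<And>a b. f (a + b) = f a + f b" and fa: "\<And>g m. f (act g m) = act g (f m)"
    and inj: "\<And>m. f m = 0 \<Longrightarrow> m = 0"
  shows "bar_bd gmul act (\<lambda>s. f (c s)) = (\<lambda>t. f (bar_bd gmul act c t))"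
proof -
  have "f 0 = f 0 + f 0" using add[of 0 0] by simp
  hence z: "f 0 = 0" by simp
  have neg: "f (- a) = - f a" for a
  proof -
    have "f a + f (- a) = 0" using add[of a "- a"] z by simp
    thus ?thesis by (simp add: eq_neg_iff_add_eq_0 add.commute)
  qed
  have S: "{s. f (c s) \<noteq> 0} = {s. c s \<noteq> 0}" using inj z by auto
  have tm: "f (let (r, m) = bar_face gmul act j s x in if r = t then (if even j then m else - m) else 0) =
    (let (r, m) = bar_face gmul act j s (f x) in if r = t then (if even j then m else - m) else 0)" for j s x t
    by (simp add: bar_face_def Let_def z neg fa)
  show ?thesis
    unfolding bar_bd_def S
    by (rule ext) (simp only: phi_sum[of f, OF add] tm)
qed

context barh
begin

lemma finite_supp_H: "finite (supp (Hb z s m))"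
  unfolding Hb_def by (rule finite_supp_sum) auto

lemma finite_supp_fc[simp]: "finite (supp (fc gmul act k s m))"
  by (cases "bar_face gmul act k s m") (simp add: fc_def)

lemma finite_supp_F: "finite (supp (Fb gmul act s m))"
  unfolding Fb_def by (rule finite_supp_sum) (auto simp: fc_def split: prod.split)

lemma extl_F_H: "extl (Fb gmul act) (Hb z s m) = (\<Sum>j\<in>{0..length s}. sgnm j (Fb gmul act (ins z j s) m))"
  unfolding Hb_def
  by (subst extl_sum) (auto simp: addv_F extl_sgnm extl_delta)

lemma extl_H_F: "extl (Hb z) (Fb gmul act s m) =
   (\<Sum>k\<in>{0..length s}. sgnm k (case bar_face gmul act k s m of (r, m') \<Rightarrow> Hb z r m'))"
proof -
  have e: "extl (Hb z) (fc gmul act k s m) = (case bar_face gmul act k s m of (r, m') \<Rightarrow> Hb z r m')" for k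
    by (cases "bar_face gmul act k s m") (simp add: fc_def extl_delta addv_H)
  show ?thesis unfolding Fb_def
    by (subst extl_sum) (auto simp: addv_H extl_sgnm e)
qed

lemma chain_id:
  assumes fin: "finite (supp c)" and len: "\<And>s. s \<in> supp c \<Longrightarrow> length s = i \<and> set s \<subseteq> G"
  shows "extl (Fb gmul act) (extl (Hb z) c) =
     (\<lambda>t. c t - act z (c t)) - (if i = 0 then 0 else extl (Hb z) (extl (Fb gmul act) c))"
proof -
  define X where "X s m = (\<Sum>k\<in>{0..length s}. sgnm k (case bar_face gmul act k s m of (r, m') \<Rightarrow> Hb z r m'))" for s m
  have "extl (Hb z) c = (\<Sum>s\<in>supp c. Hb z s (c s))" by (simp add: extl_def)
  hence "extl (Fb gmul act) (extl (Hb z) c) = (\<Sum>s\<in>supp c. extl (Fb gmul act) (Hb z s (c s)))"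
    using fin by (simp add: extl_sum finite_supp_H addv_F)
  also have "\<dots> = (\<Sum>s\<in>supp c. delta s (c s) - delta s (act z (c s)) - (if s = [] then 0 else X s (c s)))"
  proof (intro sum.cong refl)
    fix s assume "s \<in> supp c"
    hence "set s \<subseteq> G" using len by auto
    thus "extl (Fb gmul act) (Hb z s (c s)) = delta s (c s) - delta s (act z (c s)) - (if s = [] then 0 else X s (c s))"
      by (simp only: extl_F_H psig X_def)
  qed
  also have "\<dots> = (\<Sum>s\<in>supp c. delta s (c s)) - (\<Sum>s\<in>supp c. delta s (act z (c s))) -
       (\<Sum>s\<in>supp c. (if s = [] then 0 else X s (c s)))"
    by (simp add: sum_subtractf)
  also have "(\<Sum>s\<in>supp c. delta s (c s)) = c"
    using chain_as_sum[OF fin, of id] by (auto simp: fun_eq_iff)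
  also have "(\<Sum>s\<in>supp c. delta s (act z (c s))) = (\<lambda>t. act z (c t))"
    using chain_as_sum[OF fin, of "act z"] by (auto simp: fun_eq_iff)
  also have "(\<Sum>s\<in>supp c. (if s = [] then 0 else X s (c s))) =
     (if i = 0 then 0 else extl (Hb z) (extl (Fb gmul act) c))"
  proof (cases "i = 0")
    case True
    hence "\<And>s. s \<in> supp c \<Longrightarrow> s = []" using len by auto
    thus ?thesis using True by simp
  next
    case False
    hence ne: "\<And>s. s \<in> supp c \<Longrightarrow> s \<noteq> []" using len by fastforce
    have "extl (Fb gmul act) c = (\<Sum>s\<in>supp c. Fb gmul act s (c s))" by (simp add: extl_def)
    hence "extl (Hb z) (extl (Fb gmul act) c) = (\<Sum>s\<in>supp c. extl (Hb z) (Fb gmul act s (c s)))"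
      using fin by (simp add: extl_sum addv_H finite_supp_F)
    also have "\<dots> = (\<Sum>s\<in>supp c. X s (c s))" by (simp only: extl_H_F X_def)
    finally have "extl (Hb z) (extl (Fb gmul act) c) = (\<Sum>s\<in>supp c. X s (c s))" .
    thus ?thesis using False ne by simp
  qed
  finally show ?thesis by (simp add: fun_eq_iff)
qed

lemma hc_supp:
  assumes "extl (Hb z) c t \<noteq> 0"
  shows "\<exists>s\<in>supp c. \<exists>j \<le> length s. t = ins z j s"
proof (rule ccontr)
  assume "\<not> ?thesis"
  hence "\<forall>s\<in>supp c. \<forall>j\<in>{0..length s}. ins z j s \<noteq> t" by (metis atLeastAtMost_iff)
  hence "extl (Hb z) c t = 0"
    unfolding extl_def Hb_def by (auto simp: sum_fun_apply sgnm_apply delta_def intro!: sum.neutral)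
  thus False using assms by simp
qed

lemma hc_vals:
  assumes M0: "0 \<in> M" and Madd: "\<And>a b. a \<in> M \<Longrightarrow> b \<in> M \<Longrightarrow> a + b \<in> M"
    and Mneg: "\<And>a. a \<in> M \<Longrightarrow> - a \<in> M" and cM: "\<And>s. c s \<in> M"
  shows "extl (Hb z) c t \<in> M"
proof -
  have sc: "\<And>f A. (\<And>x. x \<in> A \<Longrightarrow> f x \<in> M) \<Longrightarrow> sum f A \<in> M"
  proof -
    fix f A assume "\<And>x. x \<in> A \<Longrightarrow> f x \<in> M"
    thus "sum f A \<in> M" by (induction A rule: infinite_finite_induct) (auto simp: M0 Madd)
  qed
  show ?thesis
    unfolding extl_def Hb_def sum_fun_apply
    by (intro sc) (auto simp: sgnm_apply delta_def sgnm_def M0 Mneg cM)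
qed

end


definition zm :: "nat \<Rightarrow> nat \<Rightarrow> nat \<Rightarrow> rat" where "zm n = (\<lambda>i j. - mat_one n i j)"

lemma sum_zm_left: "(\<Sum>k<n. - mat_one n i k * v k) = (if i < n then - v i else (0::rat))"
proof -
  have "(\<Sum>k<n. - mat_one n i k * v k) = (\<Sum>k\<in>{..<n}. if k = i then - v k else 0)"
    by (intro sum.cong) (auto simp: mat_one_def)
  also have "\<dots> = (if i < n then - v i else 0)" by (subst sum.delta) auto
  finally show ?thesis .
qed

lemma sum_zm_right: "(\<Sum>k<n. A i k * - mat_one n k j) = (if j < n then - A i j else (0::rat))"
proof -
  have "(\<Sum>k<n. A i k * - mat_one n k j) = (\<Sum>k\<in>{..<n}. if k = j then - A i k else 0)"
    by (intro sum.cong) (auto simp: mat_one_def)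
  also have "\<dots> = (if j < n then - A i j else 0)" by (subst sum.delta) auto
  finally show ?thesis .
qed

lemma mat_vec_zm: "mat_vec n (zm n) v = (\<lambda>k. if k < n then - v k else 0)"
  unfolding mat_vec_def zm_def sum_zm_left by (rule refl)

lemma mat_mult_zm_right: "mat_mult n A (zm n) = (\<lambda>i j. if j < n then - A i j else 0)"
  unfolding mat_mult_def zm_def sum_zm_right by (rule refl)

lemma mat_mult_zm_left: "mat_mult n (zm n) A = (\<lambda>i j. if i < n then - A i j else 0)"
  unfolding mat_mult_def zm_def sum_zm_left by (rule refl)

lemma mat_vec_add: "mat_vec n A (a + b) = mat_vec n A a + mat_vec n A b"
  by (simp add: mat_vec_def fun_eq_iff distrib_left sum.distrib)

lemma zloc_zero: "prime p \<Longrightarrow> 0 \<in> zloc p" using zloc_int[of p 0] by simp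
lemma zloc_m1: "prime p \<Longrightarrow> -1 \<in> zloc p" using zloc_int[of p "-1"] by simp

lemma zm_in: assumes p: "prime p" shows "zm n \<in> orth_group n p"
proof -
  have zz: "zm n \<in> zmats n p"
    unfolding zmats_def zm_def mat_one_def using zloc_zero[OF p] zloc_m1[OF p] by auto
  have inv: "mat_mult n (zm n) (zm n) = mat_one n"
    unfolding mat_mult_zm_left by (auto simp: zm_def mat_one_def fun_eq_iff)
  have q: "qform n (mat_vec n (zm n) v) = qform n v" for v
    unfolding qform_def mat_vec_zm by (intro sum.cong) auto
  show ?thesis unfolding orth_group_def using zz inv q by blast
qed

lemma central_zm: "A \<in> orth_group n p \<Longrightarrow> mat_mult n A (zm n) = mat_mult n (zm n) A"
  unfolding mat_mult_zm_left mat_mult_zm_right orth_group_def zmats_def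
  by (auto simp: fun_eq_iff)

lemma zvecs_add: "prime p \<Longrightarrow> v \<in> zvecs n p \<Longrightarrow> w \<in> zvecs n p \<Longrightarrow> v + w \<in> zvecs n p"
  unfolding zvecs_def by (auto simp: zloc_add)
lemma zvecs_neg: "prime p \<Longrightarrow> v \<in> zvecs n p \<Longrightarrow> - v \<in> zvecs n p"
  unfolding zvecs_def by (auto simp: zloc_neg)
lemma zvecs_zero: "prime p \<Longrightarrow> 0 \<in> zvecs n p"
  unfolding zvecs_def by (auto simp: zloc_zero)
lemma zvecs_half: "prime p \<Longrightarrow> odd p \<Longrightarrow> v \<in> zvecs n p \<Longrightarrow> (\<lambda>k. v k / 2) \<in> zvecs n p"
  unfolding zvecs_def by (auto simp: zloc_half)

theorem corollaryD:
  fixes p n i :: nat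
  assumes "prime p" and "odd p" and "2 * i + 8 \<le> n"
  shows "group_homology_vanishes (orth_group n p) (mat_mult n) (mat_vec n) (zvecs n p) i"
proof -
  note p = assms(1) and o = assms(2)
  interpret barh "orth_group n p" "mat_mult n" "mat_vec n" "zm n"
    by unfold_locales (auto simp: mat_vec_add central_zm)
  show ?thesis unfolding group_homology_vanishes_def
  proof (intro ballI impI)
    fix c assume cC: "c \<in> bar_chains (orth_group n p) (zvecs n p) i"
      and cyc: "i = 0 \<or> bar_bd (mat_mult n) (mat_vec n) c = (\<lambda>_. 0)"
    define phi where "phi v = (\<lambda>k. v k / 2)" for v :: "nat \<Rightarrow> rat"
    define c' where "c' s = phi (c s)" for s
    have finc: "finite (supp c)" using cC unfolding bar_chains_def supp_def by simp
    have cM: "c s \<in> zvecs n p" for s using cC unfolding bar_chains_def by simp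
    have c'M: "c' s \<in> zvecs n p" for s unfolding c'_def phi_def using zvecs_half[OF p o cM] .
    have phi0: "phi v = 0 \<longleftrightarrow> v = 0" for v by (auto simp: phi_def fun_eq_iff)
    have suppc': "supp c' = supp c" by (auto simp: supp_def c'_def phi0)
    have lenc': "length s = i \<and> set s \<subseteq> orth_group n p" if "s \<in> supp c'" for s
      using that[unfolded suppc'] cC unfolding bar_chains_def supp_def by auto
    define b where "b = extl (Hb (zm n)) c'"
    have bC: "b \<in> bar_chains (orth_group n p) (zvecs n p) (Suc i)"
      unfolding bar_chains_def
    proof (intro CollectI conjI allI impI)
      have "b = (\<Sum>s\<in>supp c'. Hb (zm n) s (c' s))" by (simp add: b_def extl_def)
      hence "finite (supp b)" using finc suppc' by (simp add: finite_supp_sum finite_supp_H)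
      thus "finite {s. b s \<noteq> 0}" by (simp add: supp_def)
    next
      fix t assume "b t \<noteq> 0"
      then obtain s j where s: "s \<in> supp c'" "j \<le> length s" "t = ins (zm n) j s"
        using hc_supp unfolding b_def by blast
      show "length t = Suc i" using s lenc' by (simp add: length_ins)
      have "set s \<subseteq> orth_group n p" using lenc'[OF s(1)] by blast
      thus "set t \<subseteq> orth_group n p" using s(3) set_ins[of "zm n" j s] zm_in[OF p, of n] by blast
    next
      fix t show "b t \<in> zvecs n p" unfolding b_def
        by (rule hc_vals) (auto simp: zvecs_zero[OF p] zvecs_add[OF p] zvecs_neg[OF p] c'M)
    qed
    have key: "bar_bd (mat_mult n) (mat_vec n) b =
       (\<lambda>t. c' t - mat_vec n (zm n) (c' t)) - (if i = 0 then 0 else extl (Hb (zm n)) (extl (Fb (mat_mult n) (mat_vec n)) c'))"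
      unfolding bar_bd_extl b_def using chain_id[of c' i] finc suppc' lenc' by simp
    have "(if i = 0 then 0 else extl (Hb (zm n)) (extl (Fb (mat_mult n) (mat_vec n)) c')) = 0"
    proof (cases "i = 0")
      case False
      hence bd0: "bar_bd (mat_mult n) (mat_vec n) c = 0" using cyc by (simp add: zero_fun_def)
      have "bar_bd (mat_mult n) (mat_vec n) c' = (\<lambda>t. phi (bar_bd (mat_mult n) (mat_vec n) c t))"
        unfolding c'_def
        by (rule bar_bd_phi) (auto simp: phi_def fun_eq_iff add_divide_distrib mat_vec_def sum_divide_distrib phi0)
      hence "extl (Fb (mat_mult n) (mat_vec n)) c' = 0"
        unfolding bar_bd_extl[symmetric] bd0 by (simp add: phi_def fun_eq_iff)
      thus ?thesis by simp
    qed simp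
    hence "bar_bd (mat_mult n) (mat_vec n) b = (\<lambda>t. c' t - mat_vec n (zm n) (c' t))" using key by simp
    also have "\<dots> = c"
    proof (rule ext)
      fix t
      have "c' t k = 0" if "n \<le> k" for k using c'M[of t] that unfolding zvecs_def by auto
      thus "c' t - mat_vec n (zm n) (c' t) = c t"
        unfolding mat_vec_zm by (auto simp: fun_eq_iff c'_def phi_def)
    qed
    finally show "\<exists>b\<in>bar_chains (orth_group n p) (zvecs n p) (Suc i). bar_bd (mat_mult n) (mat_vec n) b = c"
      using bC by blast
  qed
qed

end
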